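(* Let $\alpha>0$ and $\beta\in\mathbb{R}$, and define $u:[0,1]\to\mathbb{R}$ by $u(x)=\beta-\alpha|x-\frac13|$ for $x<1/2$ and $u(x)=u(1-x)$ for $x\ge 1/2$ (equivalently $u(x)=f(x)$ for $x<1/2$, $u(x)=f(1-x)$ for $x\ge1/2$, where $f(x)=\alpha(x-\frac13)+\beta$ for $x<1/3$ and $f(x)=\alpha(\frac13-x)+\beta$ for $1/3\le x\le 1/2$). Let $A=u$ and $T(x)=2x\pmod 1$. Then for every $x\in[0,1]$, $$\max_{T(y)=x}[A(y)+u(y)]=\max\{2u(x/2),\,2u((x+1)/2)\}=u(x)+\beta,$$ so $u$ is a calibrated subaction for the potential $A=u$, with $m(A)=\beta$.
   Context: A calibrated subaction for $A$ is a continuous $V$ with $V(x)=\max_{T(y)=x}[A(y)+V(y)-m(A)]$, where $m(A)$ is the supremum of $\int A\,d\rho$ over $T$-invariant probabilities $\rho$. *)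

theory Defs
  imports "HOL-Probability.Probability"
begin

definition u_fun :: "real \<Rightarrow> real \<Rightarrow> real \<Rightarrow> real" where
  "u_fun \<alpha> \<beta> x = (if x < 1/2 then \<beta> - \<alpha> * \<bar>x - 1/3\<bar> else \<beta> - \<alpha> * \<bar>(1 - x) - 1/3\<bar>)"

definition Tmap :: "real \<Rightarrow> real" where
  "Tmap y = frac (2 * y)"

text \<open>Preimages of x under T, on the circle [0,1] with 0 and 1 identified.\<close>
definition preim :: "real \<Rightarrow> real set" where
  "preim x = {y \<in> {0..1}. Tmap y = frac x}"

definition T_invariant_prob :: "real measure \<Rightarrow> bool" where
  "T_invariant_prob \<rho> \<longleftrightarrow> prob_space \<rho> \<and> sets \<rho> = sets (restrict_space borel {0..1})
     \<and> Tmap \<in> measurable \<rho> \<rho> \<and> distr \<rho> \<rho> Tmap = \<rho>"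

definition m_pot :: "(real \<Rightarrow> real) \<Rightarrow> real" where
  "m_pot A = Sup {integral\<^sup>L \<rho> A | \<rho>. T_invariant_prob \<rho>}"

definition calibrated_subaction :: "(real \<Rightarrow> real) \<Rightarrow> (real \<Rightarrow> real) \<Rightarrow> bool" where
  "calibrated_subaction A V \<longleftrightarrow> continuous_on {0..1} V \<and>
     (\<forall>x\<in>{0..1}. V x = Max ((\<lambda>y. A y + V y - m_pot A) ` preim x))"

end

theory Submission
  imports Defs
begin

lemma u_alt: "u_fun a b x = b - a * min \<bar>x - 1/3\<bar> \<bar>x - 2/3\<bar>"
  unfolding u_fun_def by (auto simp: abs_if min_def)

lemma u_cont: "continuous_on S (u_fun a b)"
  unfolding u_alt[abs_def] by (intro continuous_intros)

lemma u_meas: "u_fun a b \<in> borel_measurable borel"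
  using u_cont[of UNIV] by (simp add: borel_measurable_continuous_onI)

lemma frac12: "1 \<le> (t::real) \<Longrightarrow> t < 2 \<Longrightarrow> frac t = t - 1"
  unfolding frac_def by (simp add: floor_eq_iff)

lemma preim_sub:
  assumes "x \<in> {0..1}" "y \<in> preim x"
  shows "y = x/2 \<or> y = (x+1)/2 \<or> ((x = 0 \<or> x = 1) \<and> (y = 0 \<or> y = 1))"
proof -
  have y: "0 \<le> y" "y \<le> 1" and e: "frac (2*y) = frac x" using assms(2) by (auto simp: preim_def Tmap_def)
  have fx: "frac x = (if x = 1 then 0 else x)" using assms(1) by (auto simp: frac_eq)
  consider "2*y < 1" | "1 \<le> 2*y" "2*y < 2" | "y = 1" using y by linarith
  then show ?thesis
  proof cases
    case 1 then have "frac (2*y) = 2*y" using y by (simp add: frac_eq)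
    then show ?thesis using e fx by (auto split: if_splits)
  next
    case 2 then have "frac (2*y) = 2*y - 1" by (simp add: frac12)
    then show ?thesis using e fx 2 by (auto split: if_splits)
  next
    case 3 then show ?thesis using e fx by (auto split: if_splits)
  qed
qed

lemma preim_in:
  assumes "x \<in> {0..1}"
  shows "x/2 \<in> preim x" "(x+1)/2 \<in> preim x"
proof -
  show "x/2 \<in> preim x" using assms
    by (cases "x = 1") (auto simp: preim_def Tmap_def frac_eq)
  show "(x+1)/2 \<in> preim x" using assms
  proof (cases "x = 1")
    case False
    then have "frac (x+1) = x" using assms by (simp add: frac12 frac_eq)
    moreover have "2*((x+1)/2) = x+1" by simp
    ultimately show ?thesis using assms False by (auto simp: preim_def Tmap_def frac_eq simp del: times_divide_eq_right)
  qed (auto simp: preim_def Tmap_def)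
qed

lemma preim_fin: assumes "x \<in> {0..1}" shows "finite (preim x)"
proof -
  have "preim x \<subseteq> {x/2, (x+1)/2, 0, 1}" using preim_sub[OF assms] by blast
  then show ?thesis by (rule finite_subset) simp
qed

lemma maxeq:
  assumes "a > 0" "x \<in> {0..1}"
  shows "max (2 * u_fun a b (x/2)) (2 * u_fun a b ((x+1)/2)) = u_fun a b x + b"
  using assms unfolding u_alt by (auto simp: abs_if min_def max_def field_simps)

lemma Max_pre:
  assumes "a > 0" "x \<in> {0..1}"
  shows "Max ((\<lambda>y. u_fun a b y + u_fun a b y) ` preim x)
              = max (2 * u_fun a b (x/2)) (2 * u_fun a b ((x+1)/2))"
proof (rule Max_eqI)
  show "finite ((\<lambda>y. u_fun a b y + u_fun a b y) ` preim x)" using preim_fin[OF assms(2)] by simp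
  show "max (2 * u_fun a b (x/2)) (2 * u_fun a b ((x+1)/2)) \<in> (\<lambda>y. u_fun a b y + u_fun a b y) ` preim x"
    using preim_in[OF assms(2)] by (cases "u_fun a b (x/2) \<le> u_fun a b ((x+1)/2)") (auto simp: max_def)
  fix t assume "t \<in> (\<lambda>y. u_fun a b y + u_fun a b y) ` preim x"
  then obtain y where t: "t = 2 * u_fun a b y" and y: "y \<in> preim x" by auto
  show "t \<le> max (2 * u_fun a b (x/2)) (2 * u_fun a b ((x+1)/2))"
    using preim_sub[OF assms(2) y] assms unfolding t u_alt
    by (auto simp: abs_if min_def max_def field_simps)
qed

lemma int_le:
  assumes "T_invariant_prob \<rho>" and that: "a > 0"
  shows "integral\<^sup>L \<rho> (u_fun a b) \<le> b"
proof -
  have ps: "prob_space \<rho>" and st: "sets \<rho> = sets (restrict_space borel {0..1::real})"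
    using assms by (auto simp: T_invariant_prob_def)
  interpret prob_space \<rho> by (rule ps)
  have sp: "space \<rho> = {0..1}" using sets_eq_imp_space_eq[OF st] by simp
  have m: "u_fun a b \<in> borel_measurable \<rho>"
    using measurable_restrict_space1[OF u_meas] by (simp add: measurable_cong_sets[OF st refl])
  have bnd: "norm (u_fun a b x) \<le> \<bar>b\<bar> + a" if x: "x \<in> {0..1}" for x
  proof -
    have "0 \<le> min \<bar>x - 1/3\<bar> \<bar>x - 2/3\<bar>" "min \<bar>x - 1/3\<bar> \<bar>x - 2/3\<bar> \<le> 1" using x by auto
    then have "0 \<le> a * min \<bar>x - 1/3\<bar> \<bar>x - 2/3\<bar>" "a * min \<bar>x - 1/3\<bar> \<bar>x - 2/3\<bar> \<le> a"
      using \<open>a > 0\<close> by (auto intro: mult_left_le)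
    then show ?thesis unfolding u_alt real_norm_def by (cases "b \<ge> 0") (auto simp: abs_le_iff)
  qed
  have int: "integrable \<rho> (u_fun a b)"
    by (rule integrable_const_bound[where B="\<bar>b\<bar> + a"]) (use bnd sp m in auto)
  have "integral\<^sup>L \<rho> (u_fun a b) \<le> integral\<^sup>L \<rho> (\<lambda>_. b)"
    by (rule integral_mono[OF int]) (use sp that in \<open>auto simp: u_alt\<close>)
  then show ?thesis by (simp add: prob_space)
qed

definition P2 :: "real pmf" where "P2 = pmf_of_set {1/3, 2/3}"
definition clmp :: "real \<Rightarrow> real" where "clmp y = max 0 (min 1 y)"
definition rho2 :: "real measure" where "rho2 = distr (measure_pmf P2) (restrict_space borel {0..1}) clmp"

lemma clmp_meas: "clmp \<in> measurable (measure_pmf P2) (restrict_space borel {0..1})"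
  by (auto simp: clmp_def)

lemma Tmap_meas: "Tmap \<in> borel_measurable borel"
  unfolding Tmap_def frac_def by measurable

lemma rho2_inv: "T_invariant_prob rho2"
proof -
  have st: "sets rho2 = sets (restrict_space borel {0..1::real})" by (simp add: rho2_def)
  have sp: "space rho2 = {0..1}" by (simp add: rho2_def)
  have ps: "prob_space rho2" unfolding rho2_def
    by (rule measure_pmf.prob_space_distr[OF clmp_meas])
  have Tr: "Tmap \<in> {0..1} \<rightarrow> {0..1}" by (auto simp: Tmap_def frac_lt_1 less_imp_le)
  have Tm: "Tmap \<in> measurable rho2 rho2"
    unfolding measurable_cong_sets[OF st st]
    by (rule measurable_restrict_space3[OF Tmap_meas]) (use Tr in auto)
  have Tm2: "Tmap \<in> measurable (restrict_space borel {0..1}) (restrict_space borel {0..1::real})"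
    using Tm measurable_cong_sets[OF st st] by simp
  have t1: "Tmap (1/3) = 2/3" by (simp add: Tmap_def frac_eq)
  have t2: "Tmap (2/3) = 1/3" using frac12[of "4/3"] by (simp add: Tmap_def)
  have c1: "clmp (1/3) = 1/3" "clmp (2/3) = 2/3" by (auto simp: clmp_def)
  have "distr rho2 rho2 Tmap = distr (measure_pmf P2) (restrict_space borel {0..1}) (Tmap \<circ> clmp)"
  proof -
    have "distr rho2 rho2 Tmap = distr rho2 (restrict_space borel {0..1}) Tmap"
      by (rule distr_cong) (auto simp: rho2_def)
    also have "\<dots> = distr (measure_pmf P2) (restrict_space borel {0..1}) (Tmap \<circ> clmp)"
      unfolding rho2_def by (rule distr_distr[OF Tm2 clmp_meas])
    finally show ?thesis .
  qed
  also have "\<dots> = rho2"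
  proof (rule measure_eqI)
    show "sets (distr (measure_pmf P2) (restrict_space borel {0..1}) (Tmap \<circ> clmp)) = sets rho2"
      by (simp add: rho2_def)
  next
    fix A assume A: "A \<in> sets (distr (measure_pmf P2) (restrict_space borel {0..1}) (Tmap \<circ> clmp))"
    have m2: "Tmap \<circ> clmp \<in> measurable (measure_pmf P2) (restrict_space borel {0..1})"
      using measurable_comp[OF clmp_meas Tm2] .
    have "emeasure (distr (measure_pmf P2) (restrict_space borel {0..1}) (Tmap \<circ> clmp)) A
       = emeasure (measure_pmf P2) ((Tmap \<circ> clmp) -` A)"
      using A by (simp add: emeasure_distr[OF m2])
    also have "\<dots> = card ({1/3, 2/3} \<inter> ((Tmap \<circ> clmp) -` A)) / card {1/3, 2/3::real}"
      unfolding P2_def by (rule emeasure_pmf_of_set) auto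
    also have "\<dots> = card ({1/3, 2/3} \<inter> (clmp -` A)) / card {1/3, 2/3::real}"
    proof -
      have "card ({1/3, 2/3} \<inter> ((Tmap \<circ> clmp) -` A)) = card ({1/3, 2/3::real} \<inter> (clmp -` A))"
      proof -
        have tc: "Tmap (clmp (1/3)) = 2/3" "Tmap (clmp (2/3)) = 1/3" by (simp only: t1 t2 c1)+
        show ?thesis
          by (cases "1/3 \<in> A"; cases "2/3 \<in> A") (simp_all add: tc c1 t1 t2 Int_insert_left)
      qed
      then show ?thesis by simp
    qed
    also have "\<dots> = emeasure (measure_pmf P2) (clmp -` A)"
      unfolding P2_def by (rule emeasure_pmf_of_set[symmetric]) auto
    also have "\<dots> = emeasure rho2 A"
      using A by (simp add: rho2_def emeasure_distr[OF clmp_meas])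
    finally show "emeasure (distr (measure_pmf P2) (restrict_space borel {0..1}) (Tmap \<circ> clmp)) A = emeasure rho2 A" .
  qed
  finally show ?thesis using ps st Tm by (simp add: T_invariant_prob_def)
qed

lemma rho2_int: "integral\<^sup>L rho2 (u_fun a b) = b"
proof -
  have m: "u_fun a b \<in> borel_measurable (restrict_space borel {0..1})"
    by (rule measurable_restrict_space1[OF u_meas])
  have "integral\<^sup>L rho2 (u_fun a b) = integral\<^sup>L (measure_pmf P2) (\<lambda>x. u_fun a b (clmp x))"
    unfolding rho2_def by (rule integral_distr[OF clmp_meas m])
  also have "\<dots> = b" unfolding P2_def
    by (subst integral_pmf_of_set) (auto simp: clmp_def u_alt)
  finally show ?thesis .
qed

lemma mpot: assumes "a > 0" shows "m_pot (u_fun a b) = b"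
  unfolding m_pot_def
proof (rule cSup_eq_maximum)
  show "b \<in> {integral\<^sup>L \<rho> (u_fun a b) |\<rho>. T_invariant_prob \<rho>}"
    using rho2_inv rho2_int[of a b] by force
  fix x assume "x \<in> {integral\<^sup>L \<rho> (u_fun a b) |\<rho>. T_invariant_prob \<rho>}"
  then show "x \<le> b" using int_le assms by blast
qed

theorem mainTheorem5:
  fixes \<alpha> \<beta> :: real
  assumes "\<alpha> > 0"
  shows "(\<forall>x\<in>{0..1}.
            Max ((\<lambda>y. u_fun \<alpha> \<beta> y + u_fun \<alpha> \<beta> y) ` preim x)
              = max (2 * u_fun \<alpha> \<beta> (x/2)) (2 * u_fun \<alpha> \<beta> ((x+1)/2))
          \<and> max (2 * u_fun \<alpha> \<beta> (x/2)) (2 * u_fun \<alpha> \<beta> ((x+1)/2)) = u_fun \<alpha> \<beta> x + \<beta>)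
         \<and> m_pot (u_fun \<alpha> \<beta>) = \<beta>
         \<and> calibrated_subaction (u_fun \<alpha> \<beta>) (u_fun \<alpha> \<beta>)"
proof -
  have M: "m_pot (u_fun \<alpha> \<beta>) = \<beta>" by (rule mpot[OF assms])
  have C: "u_fun \<alpha> \<beta> x = Max ((\<lambda>y. u_fun \<alpha> \<beta> y + u_fun \<alpha> \<beta> y - m_pot (u_fun \<alpha> \<beta>)) ` preim x)"
    if x: "x \<in> {0..1}" for x
  proof -
    have ne: "preim x \<noteq> {}" using preim_in[OF x] by blast
    have "Max ((\<lambda>y. u_fun \<alpha> \<beta> y + u_fun \<alpha> \<beta> y - m_pot (u_fun \<alpha> \<beta>)) ` preim x)
        = Max ((\<lambda>y. (u_fun \<alpha> \<beta> y + u_fun \<alpha> \<beta> y) + (- \<beta>)) ` preim x)"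
      unfolding M by simp
    also have "\<dots> = Max ((\<lambda>y. u_fun \<alpha> \<beta> y + u_fun \<alpha> \<beta> y) ` preim x) + (- \<beta>)"
      by (rule Max_add_commute[OF preim_fin[OF x] ne])
    also have "\<dots> = u_fun \<alpha> \<beta> x"
      using Max_pre[OF assms x] maxeq[OF assms x] by simp
    finally show ?thesis by simp
  qed
  have A: "\<forall>x\<in>{0..1}.
            Max ((\<lambda>y. u_fun \<alpha> \<beta> y + u_fun \<alpha> \<beta> y) ` preim x)
              = max (2 * u_fun \<alpha> \<beta> (x/2)) (2 * u_fun \<alpha> \<beta> ((x+1)/2))
          \<and> max (2 * u_fun \<alpha> \<beta> (x/2)) (2 * u_fun \<alpha> \<beta> ((x+1)/2)) = u_fun \<alpha> \<beta> x + \<beta>"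
    using Max_pre[OF assms] maxeq[OF assms] by blast
  have B: "calibrated_subaction (u_fun \<alpha> \<beta>) (u_fun \<alpha> \<beta>)"
    unfolding calibrated_subaction_def using u_cont C by blast
  show ?thesis using A B M by blast
qed

end
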